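(* Let $\mathcal{C}$ be a complex algebra, $A,B\subseteq\mathcal{C}$ subalgebras, $\rho:A\to B$, $\psi:B\to A$ and $\mathfrak e:\mathcal C\to\mathcal C$ linear maps such that $(A,B)$ is right-liberated with respect to $(\mathfrak e,\rho,\psi)$. Let $\langle A,B\rangle$ be the subalgebra of $\mathcal C$ generated by $A\cup B$. Then $\mathfrak e[\langle A,B\rangle]=\mathfrak e[B]$.
   Context: $(A,B)$ is right-liberated with respect to $(\mathfrak e,\rho,\psi)$ if $\mathfrak e$ is a $B$-bimodule map ($\mathfrak e[b_1yb_2]=b_1\mathfrak e[y]b_2$ for $b_1,b_2\in B$, $y\in\mathcal C$) and for every $n\ge1$, $a_1,\dots,a_n\in A$, $b_1,\dots,b_{n-1}\in B$: $\mathfrak e\big[(a_1-\rho(a_1))(b_1-\psi(b_1))(a_2-\rho(a_2))\cdots(b_{n-1}-\psi(b_{n-1}))(a_n-\rho(a_n))\big]=0.$ *)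

theory Defs
  imports Complex_Main
begin

definition complex_algebra :: "(complex \<Rightarrow> 'c::ring_1 \<Rightarrow> 'c) \<Rightarrow> bool" where
  "complex_algebra smul \<longleftrightarrow>
     Vector_Spaces.vector_space smul \<and>
     (\<forall>c x y. smul c (x * y) = smul c x * y \<and> smul c (x * y) = x * smul c y)"

definition subalgebra :: "(complex \<Rightarrow> 'c::ring_1 \<Rightarrow> 'c) \<Rightarrow> 'c set \<Rightarrow> bool" where
  "subalgebra smul S \<longleftrightarrow> 0 \<in> S \<and> 1 \<in> S \<and>
     (\<forall>x\<in>S. \<forall>y\<in>S. x + y \<in> S \<and> x * y \<in> S) \<and>
     (\<forall>c. \<forall>x\<in>S. smul c x \<in> S)"

definition generated_subalgebra :: "(complex \<Rightarrow> 'c::ring_1 \<Rightarrow> 'c) \<Rightarrow> 'c set \<Rightarrow> 'c set" where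
  "generated_subalgebra smul X = \<Inter>{S. subalgebra smul S \<and> X \<subseteq> S}"

definition linear_on :: "(complex \<Rightarrow> 'c::ring_1 \<Rightarrow> 'c) \<Rightarrow> 'c set \<Rightarrow> ('c \<Rightarrow> 'c) \<Rightarrow> bool" where
  "linear_on smul S f \<longleftrightarrow>
     (\<forall>x\<in>S. \<forall>y\<in>S. f (x + y) = f x + f y) \<and> (\<forall>c. \<forall>x\<in>S. f (smul c x) = smul c (f x))"

text \<open>The alternating product
  (a_0 - rho a_0)(b_0 - psi b_0)(a_1 - rho a_1) ... (b_{n-2} - psi b_{n-2})(a_{n-1} - rho a_{n-1}).\<close>
definition alt_word :: "('c::ring_1 \<Rightarrow> 'c) \<Rightarrow> ('c \<Rightarrow> 'c) \<Rightarrow> nat \<Rightarrow> (nat \<Rightarrow> 'c) \<Rightarrow> (nat \<Rightarrow> 'c) \<Rightarrow> 'c" where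
  "alt_word \<rho> \<psi> n a b =
     prod_list (map (\<lambda>i. (a i - \<rho> (a i)) * (if i + 1 < n then b i - \<psi> (b i) else 1)) [0..<n])"

definition right_liberated ::
  "'c::ring_1 set \<Rightarrow> 'c set \<Rightarrow> ('c \<Rightarrow> 'c) \<Rightarrow> ('c \<Rightarrow> 'c) \<Rightarrow> ('c \<Rightarrow> 'c) \<Rightarrow> bool" where
  "right_liberated A B e \<rho> \<psi> \<longleftrightarrow>
     (\<forall>b1\<in>B. \<forall>b2\<in>B. \<forall>y. e (b1 * y * b2) = b1 * e y * b2) \<and>
     (\<forall>n\<ge>1. \<forall>a b. (\<forall>i<n. a i \<in> A) \<longrightarrow> (\<forall>i. i + 1 < n \<longrightarrow> b i \<in> B) \<longrightarrow>
        e (alt_word \<rho> \<psi> n a b) = 0)"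

end

theory Submission imports Defs begin

fun cw :: "('c::ring_1 \<Rightarrow> 'c) \<Rightarrow> ('c \<Rightarrow> 'c) \<Rightarrow> (nat \<Rightarrow> 'c) \<Rightarrow> (nat \<Rightarrow> 'c) \<Rightarrow> nat \<Rightarrow> 'c" where
  "cw \<rho> \<psi> a b 0 = 1"
| "cw \<rho> \<psi> a b (Suc k) = cw \<rho> \<psi> a b k * (a k - \<rho> (a k)) * (b k - \<psi> (b k))"

lemma cw_cong: "(\<And>i. i < k \<Longrightarrow> a i = a' i \<and> b i = b' i) \<Longrightarrow> cw \<rho> \<psi> a b k = cw \<rho> \<psi> a' b' k"
  by (induction k) auto

lemma prod_aux: "k < n \<Longrightarrow> prod_list (map (\<lambda>i. (a i - \<rho> (a i)) * (if i + 1 < n then b i - \<psi> (b i) else 1)) [0..<k]) = cw \<rho> \<psi> a b k"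
  by (induction k) (auto simp: mult.assoc)

lemma alt_cw: "alt_word \<rho> \<psi> (Suc k) a b = cw \<rho> \<psi> a b k * (a k - \<rho> (a k))"
  unfolding alt_word_def using prod_aux[of k "Suc k" a \<rho> b \<psi>] by simp

inductive inV :: "'c::ring_1 set \<Rightarrow> 'c set \<Rightarrow> nat \<Rightarrow> 'c \<Rightarrow> bool" for A B where
  inV0: "inV A B 0 1"
| inVS: "a \<in> A \<Longrightarrow> b \<in> B \<Longrightarrow> inV A B m v \<Longrightarrow> inV A B (Suc m) (a * b * v)"

locale lib =
  fixes smul :: "complex \<Rightarrow> 'c::ring_1 \<Rightarrow> 'c"
    and A B :: "'c set"
    and \<rho> \<psi> e :: "'c \<Rightarrow> 'c"
  assumes alg: "complex_algebra smul"
    and sA: "subalgebra smul A" and sB: "subalgebra smul B"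
    and rA: "\<rho> ` A \<subseteq> B" and lr: "linear_on smul A \<rho>"
    and pB: "\<psi> ` B \<subseteq> A" and lp: "linear_on smul B \<psi>"
    and le: "linear_on smul UNIV e"
    and rl: "right_liberated A B e \<rho> \<psi>"
begin

lemma mod: "module smul" using alg module_iff_vector_space unfolding complex_algebra_def by blast
lemma smul_mult1: "smul c (x * y) = smul c x * y"
  using alg unfolding complex_algebra_def by blast
lemma smul_mult2: "smul c (x * y) = x * smul c y"
  using alg unfolding complex_algebra_def by blast

lemma A1: "1 \<in> A" and A0: "0 \<in> A" and Aadd: "x \<in> A \<Longrightarrow> y \<in> A \<Longrightarrow> x + y \<in> A"
  and Amul: "x \<in> A \<Longrightarrow> y \<in> A \<Longrightarrow> x * y \<in> A" and Asm: "x \<in> A \<Longrightarrow> smul c x \<in> A"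
  using sA unfolding subalgebra_def by auto
lemma B1: "1 \<in> B" and B0: "0 \<in> B" and Badd: "x \<in> B \<Longrightarrow> y \<in> B \<Longrightarrow> x + y \<in> B"
  and Bmul: "x \<in> B \<Longrightarrow> y \<in> B \<Longrightarrow> x * y \<in> B" and Bsm: "x \<in> B \<Longrightarrow> smul c x \<in> B"
  using sB unfolding subalgebra_def by auto

lemma Bdiff: "x \<in> B \<Longrightarrow> y \<in> B \<Longrightarrow> x - y \<in> B"
proof -
  assume x: "x \<in> B" and y: "y \<in> B"
  have "smul (-1) y = - y" using module.scale_minus_left[OF mod, of 1 y] module.scale_one[OF mod] by simp
  then show ?thesis using Badd[OF x Bsm[OF y, of "-1"]] by simp
qed

lemma rhoB: "x \<in> A \<Longrightarrow> \<rho> x \<in> B" using rA by auto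
lemma psiA: "x \<in> B \<Longrightarrow> \<psi> x \<in> A" using pB by auto

lemma eadd: "e (x + y) = e x + e y" using le unfolding linear_on_def by auto
lemma esm: "e (smul c x) = smul c (e x)" using le unfolding linear_on_def by auto
lemma ediff: "e (x - y) = e x - e y"
  using eadd[of "x - y" y] by (simp add: algebra_simps)

lemma ebimod: "b1 \<in> B \<Longrightarrow> b2 \<in> B \<Longrightarrow> e (b1 * y * b2) = b1 * e y * b2"
  using rl unfolding right_liberated_def by auto

lemma ealt: "n \<ge> 1 \<Longrightarrow> (\<forall>i<n. a i \<in> A) \<Longrightarrow> (\<forall>i. i + 1 < n \<longrightarrow> b i \<in> B) \<Longrightarrow> e (alt_word \<rho> \<psi> n a b) = 0"
  using rl unfolding right_liberated_def by auto

definition G :: "'c \<Rightarrow> bool" where "G x \<longleftrightarrow> e x \<in> e ` B"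

lemma G_add: "G x \<Longrightarrow> G y \<Longrightarrow> G (x + y)"
proof -
  assume "G x" "G y"
  then obtain u v where "u \<in> B" "v \<in> B" "e x = e u" "e y = e v" unfolding G_def by auto
  then show ?thesis unfolding G_def by (auto simp: eadd intro!: image_eqI[of _ e "u+v"] Badd)
qed

lemma G_diff: "G x \<Longrightarrow> G y \<Longrightarrow> G (x - y)"
proof -
  assume "G x" "G y"
  then obtain u v where "u \<in> B" "v \<in> B" "e x = e u" "e y = e v" unfolding G_def by auto
  then show ?thesis unfolding G_def by (auto simp: ediff intro!: image_eqI[of _ e "u-v"] Bdiff)
qed

lemma G_eq: "x = y \<Longrightarrow> G y \<Longrightarrow> G x" by simp

lemma G_B: "b \<in> B \<Longrightarrow> G b" unfolding G_def by auto

lemma G_0: "G 0" using G_B[OF B0] .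

definition valid :: "nat \<Rightarrow> (nat \<Rightarrow> 'c) \<Rightarrow> (nat \<Rightarrow> 'c) \<Rightarrow> bool" where
  "valid k a b \<longleftrightarrow> (\<forall>i<k. a i \<in> A \<and> b i \<in> B)"

definition P0 :: "nat \<Rightarrow> bool" where
  "P0 N \<longleftrightarrow> (\<forall>b0 v. b0 \<in> B \<longrightarrow> inV A B N v \<longrightarrow> G (b0 * v))"
definition P1 :: "nat \<Rightarrow> bool" where
  "P1 N \<longleftrightarrow> (\<forall>k m b0 a b \<alpha> c v. k + 1 + m = N \<longrightarrow> b0 \<in> B \<longrightarrow> valid k a b \<longrightarrow> \<alpha> \<in> A \<longrightarrow> c \<in> B
     \<longrightarrow> inV A B m v \<longrightarrow> G (b0 * cw \<rho> \<psi> a b k * (\<alpha> - \<rho> \<alpha>) * c * v))"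
definition P2 :: "nat \<Rightarrow> bool" where
  "P2 N \<longleftrightarrow> (\<forall>k m b0 a b \<alpha> \<alpha>' \<beta>' v. k + m + 2 = N \<longrightarrow> b0 \<in> B \<longrightarrow> valid k a b \<longrightarrow> \<alpha> \<in> A \<longrightarrow> \<alpha>' \<in> A
     \<longrightarrow> \<beta>' \<in> B \<longrightarrow> inV A B m v \<longrightarrow> G (b0 * cw \<rho> \<psi> a b k * (\<alpha> - \<rho> \<alpha>) * \<alpha>' * \<beta>' * v))"

lemma step2:
  assumes IH: "\<And>N'. N' < N \<Longrightarrow> P0 N' \<and> P1 N' \<and> P2 N'"
  shows "P2 N"
proof -
  have "\<forall>m b0 a b \<alpha> \<alpha>' \<beta>' v. k + m + 2 = N \<longrightarrow> b0 \<in> B \<longrightarrow> valid k a b \<longrightarrow> \<alpha> \<in> A \<longrightarrow> \<alpha>' \<in> A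
     \<longrightarrow> \<beta>' \<in> B \<longrightarrow> inV A B m v \<longrightarrow> G (b0 * cw \<rho> \<psi> a b k * (\<alpha> - \<rho> \<alpha>) * \<alpha>' * \<beta>' * v)" for k
  proof (induction k)
    case 0
    show ?case
    proof (intro allI impI)
      fix m b0 a b \<alpha> \<alpha>' \<beta>' v
      assume h: "0 + m + 2 = N" "b0 \<in> B" "valid 0 a b" "\<alpha> \<in> A" "\<alpha>' \<in> A" "\<beta>' \<in> B" "inV A B m v"
      have P0m: "P0 (Suc m)" using IH h(1) by auto
      have v1: "inV A B (Suc m) ((\<alpha> * \<alpha>') * \<beta>' * v)" using h by (intro inVS Amul)
      have v2: "inV A B (Suc m) (\<alpha>' * \<beta>' * v)" using h by (intro inVS)
      have g1: "G (b0 * ((\<alpha> * \<alpha>') * \<beta>' * v))" using v1 h by (intro P0m[unfolded P0_def, rule_format]) auto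
      have g2: "G ((b0 * \<rho> \<alpha>) * (\<alpha>' * \<beta>' * v))" using v2 h rhoB Bmul by (intro P0m[unfolded P0_def, rule_format]) auto
      have "b0 * cw \<rho> \<psi> a b 0 * (\<alpha> - \<rho> \<alpha>) * \<alpha>' * \<beta>' * v
          = b0 * ((\<alpha> * \<alpha>') * \<beta>' * v) - (b0 * \<rho> \<alpha>) * (\<alpha>' * \<beta>' * v)"
        by (simp add: algebra_simps mult.assoc)
      then show "G (b0 * cw \<rho> \<psi> a b 0 * (\<alpha> - \<rho> \<alpha>) * \<alpha>' * \<beta>' * v)"
        using G_diff[OF g1 g2] by simp
    qed
  next
    case (Suc k)
    show ?case
    proof (intro allI impI)
      fix m b0 a b \<alpha> \<alpha>' \<beta>' v
      assume h: "Suc k + m + 2 = N" "b0 \<in> B" "valid (Suc k) a b" "\<alpha> \<in> A" "\<alpha>' \<in> A" "\<beta>' \<in> B" "inV A B m v"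
      define W where "W = cw \<rho> \<psi> a b k"
      define \<gamma> where "\<gamma> = a k"
      define \<delta> where "\<delta> = b k"
      have vk: "valid k a b" using h(3) unfolding valid_def by auto
      have \<gamma>A: "\<gamma> \<in> A" and \<delta>B: "\<delta> \<in> B" using h(3) unfolding valid_def \<gamma>_def \<delta>_def by auto
      have P1s: "P1 (k + 1 + Suc m)" and P2s: "P2 (k + m + 2)" using IH h(1) by auto
      have v1: "inV A B (Suc m) ((\<alpha> * \<alpha>') * \<beta>' * v)" using h by (intro inVS Amul)
      have v2: "inV A B (Suc m) (\<alpha>' * \<beta>' * v)" using h by (intro inVS)
      have g1: "G (b0 * W * (\<gamma> - \<rho> \<gamma>) * \<delta> * ((\<alpha> * \<alpha>') * \<beta>' * v))"
        unfolding W_def using v1 h vk \<gamma>A \<delta>B by (intro P1s[unfolded P1_def, rule_format]) auto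
      have g2: "G (b0 * W * (\<gamma> - \<rho> \<gamma>) * (\<psi> \<delta> * (\<alpha> * \<alpha>')) * \<beta>' * v)"
        unfolding W_def using h vk \<gamma>A \<delta>B psiA Amul by (intro P2s[unfolded P2_def, rule_format]) auto
      have g3: "G (b0 * W * (\<gamma> - \<rho> \<gamma>) * (\<delta> * \<rho> \<alpha>) * (\<alpha>' * \<beta>' * v))"
        unfolding W_def using v2 h vk \<gamma>A \<delta>B rhoB Bmul by (intro P1s[unfolded P1_def, rule_format]) auto
      have g4: "G (b0 * W * (\<gamma> - \<rho> \<gamma>) * \<psi> \<delta> * \<rho> \<alpha> * (\<alpha>' * \<beta>' * v))"
        unfolding W_def using h v2 vk \<gamma>A \<delta>B rhoB psiA by (intro Suc.IH[rule_format]) auto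
      have "b0 * cw \<rho> \<psi> a b (Suc k) * (\<alpha> - \<rho> \<alpha>) * \<alpha>' * \<beta>' * v
        = b0 * W * (\<gamma> - \<rho> \<gamma>) * \<delta> * ((\<alpha> * \<alpha>') * \<beta>' * v)
          - b0 * W * (\<gamma> - \<rho> \<gamma>) * (\<psi> \<delta> * (\<alpha> * \<alpha>')) * \<beta>' * v
          - b0 * W * (\<gamma> - \<rho> \<gamma>) * (\<delta> * \<rho> \<alpha>) * (\<alpha>' * \<beta>' * v)
          + b0 * W * (\<gamma> - \<rho> \<gamma>) * \<psi> \<delta> * \<rho> \<alpha> * (\<alpha>' * \<beta>' * v)"
        unfolding W_def \<gamma>_def \<delta>_def by (simp add: algebra_simps mult.assoc)
      then show "G (b0 * cw \<rho> \<psi> a b (Suc k) * (\<alpha> - \<rho> \<alpha>) * \<alpha>' * \<beta>' * v)"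
        using G_add[OF G_diff[OF G_diff[OF g1 g2] g3] g4] by simp
    qed
  qed
  then show ?thesis unfolding P2_def by blast
qed

lemma step1:
  assumes IH: "\<And>N'. N' < N \<Longrightarrow> P0 N' \<and> P1 N' \<and> P2 N'" and P2N: "P2 N"
  shows "P1 N"
proof -
  have "\<forall>k b0 a b \<alpha> c v. k + 1 + m = N \<longrightarrow> b0 \<in> B \<longrightarrow> valid k a b \<longrightarrow> \<alpha> \<in> A \<longrightarrow> c \<in> B
     \<longrightarrow> inV A B m v \<longrightarrow> G (b0 * cw \<rho> \<psi> a b k * (\<alpha> - \<rho> \<alpha>) * c * v)" for m
  proof (induction m)
    case 0
    show ?case
    proof (intro allI impI)
      fix k b0 a b \<alpha> c v
      assume h: "k + 1 + 0 = N" "b0 \<in> B" "valid k a b" "\<alpha> \<in> A" "c \<in> B" "inV A B 0 v"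
      have v: "v = 1" using h(6) by (cases rule: inV.cases) auto
      define a2 where "a2 = a(k := \<alpha>)"
      have "cw \<rho> \<psi> a2 b k = cw \<rho> \<psi> a b k" by (rule cw_cong) (auto simp: a2_def)
      hence aw: "alt_word \<rho> \<psi> (Suc k) a2 b = cw \<rho> \<psi> a b k * (\<alpha> - \<rho> \<alpha>)"
        by (simp add: alt_cw a2_def)
      have "e (alt_word \<rho> \<psi> (Suc k) a2 b) = 0"
        using h(3,4) by (intro ealt) (auto simp: a2_def valid_def)
      hence "e (b0 * cw \<rho> \<psi> a b k * (\<alpha> - \<rho> \<alpha>) * c * v) = e 0"
        using ebimod[OF h(2) h(5), of "alt_word \<rho> \<psi> (Suc k) a2 b"] aw v
        by (simp add: mult.assoc ediff[of 0 0, simplified])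
      then show "G (b0 * cw \<rho> \<psi> a b k * (\<alpha> - \<rho> \<alpha>) * c * v)"
        unfolding G_def using B0 by auto
    qed
  next
    case (Suc m)
    show ?case
    proof (intro allI impI)
      fix k b0 a b \<alpha> c v
      assume h: "k + 1 + Suc m = N" "b0 \<in> B" "valid k a b" "\<alpha> \<in> A" "c \<in> B" "inV A B (Suc m) v"
      obtain a' b' v' where v: "v = a' * b' * v'" and a'A: "a' \<in> A" and b'B: "b' \<in> B" and v': "inV A B m v'"
        using h(6) by (cases rule: inV.cases) auto
      define W where "W = cw \<rho> \<psi> a b k"
      define a2 where "a2 = a(k := \<alpha>)"
      define b2 where "b2 = b(k := c)"
      have cw2: "cw \<rho> \<psi> a2 b2 (Suc k) = W * (\<alpha> - \<rho> \<alpha>) * (c - \<psi> c)"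
      proof -
        have "cw \<rho> \<psi> a2 b2 k = cw \<rho> \<psi> a b k" by (rule cw_cong) (auto simp: a2_def b2_def)
        thus ?thesis by (simp add: W_def a2_def b2_def)
      qed
      have v2: "valid (Suc k) a2 b2" using h(3,4,5) unfolding valid_def a2_def b2_def by auto
      have P1s: "P1 (k + 1 + m)" using IH h(1) by auto
      have g1: "G (b0 * cw \<rho> \<psi> a2 b2 (Suc k) * (a' - \<rho> a') * b' * v')"
        using h v2 a'A b'B v' by (intro Suc.IH[rule_format]) auto
      have g2: "G (b0 * W * (\<alpha> - \<rho> \<alpha>) * (c * \<rho> a' * b') * v')"
        unfolding W_def using h a'A b'B v' rhoB Bmul by (intro P1s[unfolded P1_def, rule_format]) auto
      have g3: "G (b0 * W * (\<alpha> - \<rho> \<alpha>) * \<psi> c * (\<rho> a' * b') * v')"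
        unfolding W_def using h a'A b'B v' rhoB Bmul psiA by (intro P2N[unfolded P2_def, rule_format]) auto
      have g4: "G (b0 * W * (\<alpha> - \<rho> \<alpha>) * (\<psi> c * a') * b' * v')"
        unfolding W_def using h a'A b'B v' psiA Amul by (intro P2N[unfolded P2_def, rule_format]) auto
      have "b0 * cw \<rho> \<psi> a b k * (\<alpha> - \<rho> \<alpha>) * c * v
        = b0 * cw \<rho> \<psi> a2 b2 (Suc k) * (a' - \<rho> a') * b' * v'
          + b0 * W * (\<alpha> - \<rho> \<alpha>) * (c * \<rho> a' * b') * v'
          - b0 * W * (\<alpha> - \<rho> \<alpha>) * \<psi> c * (\<rho> a' * b') * v'
          + b0 * W * (\<alpha> - \<rho> \<alpha>) * (\<psi> c * a') * b' * v'"
        unfolding cw2 v W_def by (simp add: algebra_simps mult.assoc)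
      then show "G (b0 * cw \<rho> \<psi> a b k * (\<alpha> - \<rho> \<alpha>) * c * v)"
        using G_add[OF G_diff[OF G_add[OF g1 g2] g3] g4] by simp
    qed
  qed
  then show ?thesis unfolding P1_def by blast
qed

lemma step0:
  assumes IH: "\<And>N'. N' < N \<Longrightarrow> P0 N' \<and> P1 N' \<and> P2 N'" and P1N: "P1 N"
  shows "P0 N"
  unfolding P0_def
proof (intro allI impI)
  fix b0 v assume h: "b0 \<in> B" "inV A B N v"
  show "G (b0 * v)"
  proof (cases N)
    case 0
    have "v = 1" using h(2) 0 by (cases rule: inV.cases) auto
    then show ?thesis using G_B[OF h(1)] by simp
  next
    case (Suc m)
    obtain a' b' v' where v: "v = a' * b' * v'" and a'A: "a' \<in> A" and b'B: "b' \<in> B" and v': "inV A B m v'"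
      using h(2) Suc by (cases rule: inV.cases) auto
    have g1: "G (b0 * cw \<rho> \<psi> (\<lambda>_. 0) (\<lambda>_. 0) 0 * (a' - \<rho> a') * b' * v')"
      using Suc h a'A b'B v' by (intro P1N[unfolded P1_def, rule_format]) (auto simp: valid_def)
    have g2: "G ((b0 * \<rho> a' * b') * v')"
      using Suc h a'A b'B v' rhoB Bmul by (intro IH[of m, THEN conjunct1, unfolded P0_def, rule_format]) auto
    have "b0 * v = b0 * cw \<rho> \<psi> (\<lambda>_. 0) (\<lambda>_. 0) 0 * (a' - \<rho> a') * b' * v' + (b0 * \<rho> a' * b') * v'"
      unfolding v by (simp add: algebra_simps mult.assoc)
    then show ?thesis using G_add[OF g1 g2] by simp
  qed
qed

lemma allP: "P0 N \<and> P1 N \<and> P2 N"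
proof (induction N rule: less_induct)
  case (less N)
  have 2: "P2 N" using step2 less by blast
  have 1: "P1 N" using step1 less 2 by blast
  have 0: "P0 N" using step0 less 1 by blast
  show ?case using 0 1 2 by blast
qed


inductive_set Sp :: "'c set" where
  Sp_base: "b \<in> B \<Longrightarrow> inV A B m v \<Longrightarrow> b * v \<in> Sp"
| Sp_add: "x \<in> Sp \<Longrightarrow> y \<in> Sp \<Longrightarrow> x + y \<in> Sp"
| Sp_sm: "x \<in> Sp \<Longrightarrow> smul c x \<in> Sp"

lemma Sp_G: "x \<in> Sp \<Longrightarrow> G x"
proof (induction rule: Sp.induct)
  case (Sp_base b m v)
  then show ?case using allP[of m] unfolding P0_def by blast
next
  case (Sp_add x y)
  then show ?case using G_add by blast
next
  case (Sp_sm x c)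
  then obtain u where "u \<in> B" "e x = e u" unfolding G_def by auto
  then show ?case unfolding G_def using Bsm by (auto simp: esm intro!: image_eqI[of _ e "smul c u"])
qed

lemma Sp1: "1 \<in> Sp" using Sp_base[OF B1 inV0] by simp

definition M :: "'c set" where "M = {x. \<forall>y\<in>Sp. x * y \<in> Sp}"

lemma AM: "a \<in> A \<Longrightarrow> a \<in> M"
proof -
  assume a: "a \<in> A"
  have "y \<in> Sp \<Longrightarrow> a * y \<in> Sp" for y
  proof (induction rule: Sp.induct)
    case (Sp_base b m v)
    have "inV A B (Suc m) (a * b * v)" using a Sp_base by (intro inVS)
    from Sp.Sp_base[OF B1 this] show ?case by (simp add: mult.assoc)
  next
    case (Sp_add x y)
    then show ?case by (simp add: distrib_left Sp.Sp_add)
  next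
    case (Sp_sm x c)
    then show ?case by (simp add: smul_mult2[symmetric] Sp.Sp_sm)
  qed
  then show ?thesis unfolding M_def by auto
qed

lemma BM: "b \<in> B \<Longrightarrow> b \<in> M"
proof -
  assume b: "b \<in> B"
  have "y \<in> Sp \<Longrightarrow> b * y \<in> Sp" for y
  proof (induction rule: Sp.induct)
    case (Sp_base b' m v)
    from Sp.Sp_base[OF Bmul[OF b Sp_base(1)] Sp_base(2)] show ?case by (simp add: mult.assoc)
  next
    case (Sp_add x y)
    then show ?case by (simp add: distrib_left Sp.Sp_add)
  next
    case (Sp_sm x c)
    then show ?case by (simp add: smul_mult2[symmetric] Sp.Sp_sm)
  qed
  then show ?thesis unfolding M_def by auto
qed

lemma M_sub: "subalgebra smul M"
  unfolding subalgebra_def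
proof (intro conjI ballI allI)
  show "0 \<in> M" unfolding M_def using Sp_base[OF B0 inV0] by simp
  show "1 \<in> M" unfolding M_def by simp
  fix x y assume x: "x \<in> M" and y: "y \<in> M"
  show "x + y \<in> M" using x y unfolding M_def by (auto simp: distrib_right Sp_add)
  show "x * y \<in> M" using x y unfolding M_def by (auto simp: mult.assoc)
next
  fix c x assume x: "x \<in> M"
  show "smul c x \<in> M" using x unfolding M_def by (auto simp: smul_mult1[symmetric] Sp_sm)
qed

lemma gen_Sp: "generated_subalgebra smul (A \<union> B) \<subseteq> Sp"
proof
  fix x assume "x \<in> generated_subalgebra smul (A \<union> B)"
  then have "x \<in> M" unfolding generated_subalgebra_def using M_sub AM BM by blast
  then show "x \<in> Sp" unfolding M_def using Sp1 by force
qed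

lemma main: "e ` generated_subalgebra smul (A \<union> B) = e ` B"
proof
  show "e ` generated_subalgebra smul (A \<union> B) \<subseteq> e ` B"
    using gen_Sp Sp_G unfolding G_def by blast
  show "e ` B \<subseteq> e ` generated_subalgebra smul (A \<union> B)"
    unfolding generated_subalgebra_def by blast
qed

end

theorem corollary2p7:
  fixes smul :: "complex \<Rightarrow> 'c::ring_1 \<Rightarrow> 'c"
    and A B :: "'c set"
    and \<rho> \<psi> e :: "'c \<Rightarrow> 'c"
  assumes "complex_algebra smul"
    and "subalgebra smul A" and "subalgebra smul B"
    and "\<rho> ` A \<subseteq> B" and "linear_on smul A \<rho>"
    and "\<psi> ` B \<subseteq> A" and "linear_on smul B \<psi>"
    and "linear_on smul UNIV e"
    and "right_liberated A B e \<rho> \<psi>"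
  shows "e ` generated_subalgebra smul (A \<union> B) = e ` B"
proof -
  interpret lib smul A B \<rho> \<psi> e using assms by (unfold_locales)
  show ?thesis by (rule main)
qed

end
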